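(* Let $(\alpha_n,\beta_n)_{n\ge1}$ be integers with $12\sum_{k<n}\beta_k<\alpha_n\le\beta_n$ for every $n$ and $\sum_i\frac{\log\beta_i}{3^i}<\infty$. Then for all sufficiently small $\varepsilon>0$, a $B_\varepsilon$-random subset of $\mathbb{Z}^2$ is bi-sparse (with respect to $(\alpha_n,\beta_n)$) with probability $1$.
   Context: Distances on $\mathbb{Z}^2$ are $\ell_\infty$; diameters and $\beta$-neighborhoods are taken with respect to this distance. For $E\subset\mathbb{Z}^2$ and integers $\beta\ge\alpha>0$, a nonempty $X\subset E$ is an $(\alpha,\beta)$-bi-island in $E$ if $X=X_0\cup X_1$ for some sets $X_0,X_1$ such that: the $\beta$-neighborhood of $X$ contains no point of $E\setminus X$; $X_0$ and $X_1$ have diameter at most $\alpha$; and the distance between $X_0$ and $X_1$ is at most $\beta$ (one of them may be empty). Given $(\alpha_i,\beta_i)$, the cleaning process sets $E_0=E$ and obtains $E_i$ from $E_{i-1}$ by removing all $(\alpha_i,\beta_i)$-bi-islands of $E_{i-1}$ (rank $i$ bi-islands); a point is affected at step $i$ if it lies in the $\beta_i$-neighborhood of some rank $i$ bi-island. $E$ is bi-sparse if every point of $E$ is removed at some step and every point of $\mathbb{Z}^2$ is affected at only finitely many steps. $B_\varepsilon$ is the Bernoulli distribution on subsets of $\mathbb{Z}^2$: each point belongs to the set independently with probability $\varepsilon$. *)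

theory Defs
  imports "HOL-Probability.Probability"
begin

type_synonym pt = "int \<times> int"

definition linf :: "pt \<Rightarrow> pt \<Rightarrow> int" where
  "linf p q = max \<bar>fst p - fst q\<bar> \<bar>snd p - snd q\<bar>"

definition nbhd :: "int \<Rightarrow> pt set \<Rightarrow> pt set" where
  "nbhd b X = {q. \<exists>p\<in>X. linf p q \<le> b}"

definition diam_le :: "pt set \<Rightarrow> int \<Rightarrow> bool" where
  "diam_le X a \<longleftrightarrow> (\<forall>p\<in>X. \<forall>q\<in>X. linf p q \<le> a)"

definition setdist_le :: "pt set \<Rightarrow> pt set \<Rightarrow> int \<Rightarrow> bool" where
  "setdist_le X Y b \<longleftrightarrow> X = {} \<or> Y = {} \<or> (\<exists>p\<in>X. \<exists>q\<in>Y. linf p q \<le> b)"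

definition bi_island :: "int \<Rightarrow> int \<Rightarrow> pt set \<Rightarrow> pt set \<Rightarrow> bool" where
  "bi_island a b E X \<longleftrightarrow> X \<noteq> {} \<and> X \<subseteq> E \<and> nbhd b X \<inter> (E - X) = {} \<and>
     (\<exists>X0 X1. X = X0 \<union> X1 \<and> diam_le X0 a \<and> diam_le X1 a \<and> setdist_le X0 X1 b)"

(* cleaning process; the parameter sequences are indexed from 1 (index 0 unused) *)
fun clean :: "(nat \<Rightarrow> int) \<Rightarrow> (nat \<Rightarrow> int) \<Rightarrow> pt set \<Rightarrow> nat \<Rightarrow> pt set" where
  "clean a b E 0 = E"
| "clean a b E (Suc i) = clean a b E i - \<Union>{X. bi_island (a (Suc i)) (b (Suc i)) (clean a b E i) X}"

definition affected :: "(nat \<Rightarrow> int) \<Rightarrow> (nat \<Rightarrow> int) \<Rightarrow> pt set \<Rightarrow> nat \<Rightarrow> pt \<Rightarrow> bool" where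
  "affected a b E i x \<longleftrightarrow> 1 \<le> i \<and>
     (\<exists>X. bi_island (a i) (b i) (clean a b E (i - 1)) X \<and> x \<in> nbhd (b i) X)"

definition bi_sparse :: "(nat \<Rightarrow> int) \<Rightarrow> (nat \<Rightarrow> int) \<Rightarrow> pt set \<Rightarrow> bool" where
  "bi_sparse a b E \<longleftrightarrow> (\<forall>x\<in>E. \<exists>i. x \<notin> clean a b E i) \<and>
     (\<forall>x. finite {i. affected a b E i x})"

(* Bernoulli measure B_eps on subsets of Z^2, as indicator functions *)
definition bernoulli_field :: "real \<Rightarrow> (pt \<Rightarrow> bool) measure" where
  "bernoulli_field eps = PiM UNIV (\<lambda>_. measure_pmf (bernoulli_pmf eps))"

end

theory Submission
  imports Defs
begin


lemma linf_sym: "linf p q = linf q p" by (auto simp: linf_def)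
lemma linf_tri: "linf p r \<le> linf p q + linf q r" by (auto simp: linf_def)
lemma linf_nonneg: "linf p q \<ge> 0" by (auto simp: linf_def)
lemma linf_self[simp]: "linf p p = 0" by (auto simp: linf_def)
lemma linf_zero: "linf p q \<le> 0 \<Longrightarrow> p = q"
  by (cases p; cases q) (auto simp: linf_def)

definition sq :: "pt \<Rightarrow> int \<Rightarrow> pt set" where
  "sq x r = {p. linf x p \<le> r}"

lemma sq_eq: "sq x r = {fst x - r .. fst x + r} \<times> {snd x - r .. snd x + r}"
  by (cases x) (auto simp: sq_def linf_def)

lemma finite_sq[simp]: "finite (sq x r)" by (simp add: sq_eq)

lemma card_sq: "r \<ge> 0 \<Longrightarrow> real (card (sq x r)) = (2*r+1)^2"
  by (simp add: sq_eq card_cartesian_product power2_eq_square)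

fun W :: "(nat \<Rightarrow> int) \<Rightarrow> nat \<Rightarrow> pt \<Rightarrow> pt set set" where
  "W b 0 x = {{x}}"
| "W b (Suc n) x = {S1 \<union> S2 \<union> S3 | S1 S2 S3 z w. z \<in> sq x (3 * b (Suc n)) \<and> w \<in> sq x (3 * b (Suc n))
      \<and> S1 \<in> W b n x \<and> S2 \<in> W b n z \<and> S3 \<in> W b n w \<and> S1 \<inter> S2 = {} \<and> S1 \<inter> S3 = {} \<and> S2 \<inter> S3 = {}}"



lemma W_finite: "finite (W b n x)"
proof (induction n arbitrary: x)
  case 0 then show ?case by simp
next
  case (Suc n)
  let ?B = "sq x (3 * b (Suc n))"
  let ?U = "\<Union>y\<in>?B. W b n y"
  have "W b (Suc n) x \<subseteq> (\<lambda>(z,w,S1,S2,S3). S1 \<union> S2 \<union> S3) ` (?B \<times> ?B \<times> ?U \<times> ?U \<times> ?U)"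
  proof
    fix S assume "S \<in> W b (Suc n) x"
    then obtain S1 S2 S3 z w where h: "S = S1 \<union> S2 \<union> S3" "z \<in> ?B" "w \<in> ?B"
      "S1 \<in> W b n x" "S2 \<in> W b n z" "S3 \<in> W b n w" by auto
    have "x \<in> ?B" using h(2) by (simp add: sq_def linf_def) arith
    then show "S \<in> (\<lambda>(z,w,S1,S2,S3). S1 \<union> S2 \<union> S3) ` (?B \<times> ?B \<times> ?U \<times> ?U \<times> ?U)"
      using h by (intro image_eqI[of _ _ "(z,w,S1,S2,S3)"]) auto
  qed
  moreover have "finite ?U" using Suc by auto
  ultimately show ?case by (meson finite_SigmaI finite_sq finite_imageI finite_subset)
qed

lemma W_card_step:
  assumes "\<And>y. card (W b n y) \<le> M"
  shows "card (W b (Suc n) x) \<le> card (sq x (3 * b (Suc n)))^5 * M^3"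
proof -
  let ?B = "sq x (3 * b (Suc n))"
  let ?U = "\<Union>y\<in>?B. W b n y"
  have sub: "W b (Suc n) x \<subseteq> (\<lambda>(z,w,S1,S2,S3). S1 \<union> S2 \<union> S3) ` (?B \<times> ?B \<times> ?U \<times> ?U \<times> ?U)"
  proof
    fix S assume "S \<in> W b (Suc n) x"
    then obtain S1 S2 S3 z w where h: "S = S1 \<union> S2 \<union> S3" "z \<in> ?B" "w \<in> ?B"
      "S1 \<in> W b n x" "S2 \<in> W b n z" "S3 \<in> W b n w" by auto
    have "x \<in> ?B" using h(2) by (simp add: sq_def linf_def) arith
    then show "S \<in> (\<lambda>(z,w,S1,S2,S3). S1 \<union> S2 \<union> S3) ` (?B \<times> ?B \<times> ?U \<times> ?U \<times> ?U)"
      using h by (intro image_eqI[of _ _ "(z,w,S1,S2,S3)"]) auto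
  qed
  have fU: "finite ?U" using W_finite by auto
  have cU: "card ?U \<le> card ?B * M"
  proof -
    have "card ?U \<le> (\<Sum>y\<in>?B. card (W b n y))" by (rule card_UN_le) simp
    also have "\<dots> \<le> (\<Sum>y\<in>?B. M)" by (rule sum_mono) (rule assms)
    finally show ?thesis by simp
  qed
  have "card (W b (Suc n) x) \<le> card ((\<lambda>(z,w,S1,S2,S3). S1 \<union> S2 \<union> S3) ` (?B \<times> ?B \<times> ?U \<times> ?U \<times> ?U))"
    using sub fU by (intro card_mono) auto
  also have "\<dots> \<le> card (?B \<times> ?B \<times> ?U \<times> ?U \<times> ?U)" by (rule card_image_le) (use fU in auto)
  also have "\<dots> = card ?B * card ?B * card ?U * card ?U * card ?U" by (simp add: card_cartesian_product)
  also have "\<dots> \<le> card ?B * card ?B * (card ?B * M) * (card ?B * M) * (card ?B * M)"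
    using cU by (intro mult_mono) auto
  also have "\<dots> = card ?B ^5 * M^3" by (simp add: power_def algebra_simps)
  finally show ?thesis .
qed

lemma W_card_set: "S \<in> W b n x \<Longrightarrow> finite S \<and> card S = 3^n"
proof (induction n arbitrary: x S)
  case 0 then show ?case by simp
next
  case (Suc n)
  then obtain S1 S2 S3 z w where h: "S = S1 \<union> S2 \<union> S3"
      "S1 \<in> W b n x" "S2 \<in> W b n z" "S3 \<in> W b n w" "S1 \<inter> S2 = {}" "S1 \<inter> S3 = {}" "S2 \<inter> S3 = {}" by auto
  have f: "finite S1" "finite S2" "finite S3" "card S1 = 3^n" "card S2 = 3^n" "card S3 = 3^n"
    using Suc.IH h by blast+
  have "card S = card (S1 \<union> S2) + card S3" unfolding h(1) using f h by (subst card_Un_disjoint) auto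
  also have "\<dots> = card S1 + card S2 + card S3" using f h by (subst card_Un_disjoint) auto
  finally show ?case using f h by simp
qed

lemma W_radius:
  assumes "\<And>k. k \<ge> 1 \<Longrightarrow> b k \<ge> 0"
  shows "S \<in> W b n x \<Longrightarrow> S \<subseteq> sq x (3 * (\<Sum>k\<in>{1..n}. b k))"
proof (induction n arbitrary: x S)
  case 0 then show ?case by (simp add: sq_def)
next
  case (Suc n)
  let ?R = "3 * (\<Sum>k\<in>{1..n}. b k)"
  have R: "3 * (\<Sum>k\<in>{1..Suc n}. b k) = ?R + 3 * b (Suc n)" by (simp add: algebra_simps)
  have R0: "?R \<ge> 0" using assms by (auto intro!: sum_nonneg)
  have b0: "b (Suc n) \<ge> 0" using assms by simp
  from Suc.prems obtain S1 S2 S3 z w where h: "S = S1 \<union> S2 \<union> S3" "z \<in> sq x (3 * b (Suc n))" "w \<in> sq x (3 * b (Suc n))"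
      "S1 \<in> W b n x" "S2 \<in> W b n z" "S3 \<in> W b n w" by auto
  have *: "p \<in> sq x (?R + 3 * b (Suc n))" if "y \<in> sq x (3 * b (Suc n))" "p \<in> sq y ?R" for y p
    using that linf_tri[of x p y] by (simp add: sq_def)
  have "S1 \<subseteq> sq x ?R" "S2 \<subseteq> sq z ?R" "S3 \<subseteq> sq w ?R" using Suc.IH h by auto
  moreover have "sq x ?R \<subseteq> sq x (?R + 3 * b (Suc n))" using b0 by (auto simp: sq_def)
  ultimately show ?case unfolding R h(1) using * h(2,3) by blast
qed

lemma three_points:
  fixes F :: "pt set" and A B :: int
  assumes x: "x \<in> F" and nb: "\<not> (\<exists>X. bi_island A B F X \<and> x \<in> X)" and AB: "0 < A" "A \<le> B"
  shows "\<exists>z w. z \<in> F \<and> w \<in> F \<and> linf x z > A div 2 \<and> linf x w > A div 2 \<and> linf z w > A div 2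
          \<and> linf x z \<le> 3 * B \<and> linf x w \<le> 3 * B"
proof -
  define h where "h = A div 2"
  have h: "0 \<le> h" "2 * h \<le> A" using AB by (auto simp: h_def)
  define X0 where "X0 = F \<inter> sq x h"
  have x0: "x \<in> X0" using x h by (simp add: X0_def sq_def)
  have d0: "diam_le X0 A" unfolding diam_le_def X0_def sq_def
    using h linf_tri linf_sym by (smt (verit) Int_iff mem_Collect_eq)
  have "nbhd B X0 \<inter> (F - X0) \<noteq> {}"
  proof
    assume "nbhd B X0 \<inter> (F - X0) = {}"
    then have "bi_island A B F X0" using x0 d0 unfolding bi_island_def setdist_le_def diam_le_def
      by (intro conjI exI[of _ X0] exI[of _ "{}"]) (auto simp: X0_def)
    then show False using nb x0 by blast
  qed
  then obtain z p0 where z: "z \<in> F" "z \<notin> X0" "p0 \<in> X0" "linf p0 z \<le> B"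
    unfolding nbhd_def by auto
  have xz: "linf x z > h" using z(1,2) by (auto simp: X0_def sq_def)
  have p0x: "linf x p0 \<le> h" using z(3) by (auto simp: X0_def sq_def)
  have xz2: "linf x z \<le> h + B" using linf_tri[of x z p0] p0x z(4) by simp
  define X1 where "X1 = F \<inter> sq z h"
  have z1: "z \<in> X1" using z h by (simp add: X1_def sq_def)
  have d1: "diam_le X1 A" unfolding diam_le_def X1_def sq_def
    using h linf_tri linf_sym by (smt (verit) Int_iff mem_Collect_eq)
  have "nbhd B (X0 \<union> X1) \<inter> (F - (X0 \<union> X1)) \<noteq> {}"
  proof
    assume "nbhd B (X0 \<union> X1) \<inter> (F - (X0 \<union> X1)) = {}"
    then have "bi_island A B F (X0 \<union> X1)" using x0 z1 d0 d1 z(3,4) unfolding bi_island_def setdist_le_def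
      by (intro conjI exI[of _ X0] exI[of _ "X1"]) (auto simp: X0_def X1_def)
    then show False using nb x0 by blast
  qed
  then obtain w p1 where w: "w \<in> F" "w \<notin> X0" "w \<notin> X1" "p1 \<in> X0 \<union> X1" "linf p1 w \<le> B"
    unfolding nbhd_def by auto
  have xw: "linf x w > h" using w by (auto simp: X0_def sq_def)
  have zw: "linf z w > h" using w by (auto simp: X1_def sq_def)
  have xp1: "linf x p1 \<le> 2 * h + B"
  proof (cases "p1 \<in> X0")
    case True then show ?thesis using h AB by (auto simp: X0_def sq_def)
  next
    case False
    then have "linf z p1 \<le> h" using w(4) by (auto simp: X1_def sq_def)
    then show ?thesis using linf_tri[of x p1 z] xz2 by simp
  qed
  have xw2: "linf x w \<le> 2 * h + 2 * B" using linf_tri[of x w p1] xp1 w(5) by simp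
  show ?thesis
    apply (rule exI[of _ z], rule exI[of _ w])
    using z(1) w(1) xz xw zw xz2 xw2 h AB unfolding h_def[symmetric] by auto
qed

lemma b_pos:
  fixes a b :: "nat \<Rightarrow> int" and k :: nat
  assumes hyp: "\<And>n. n \<ge> 1 \<Longrightarrow> 12 * (\<Sum>k\<in>{1..<n}. b k) < a n \<and> a n \<le> (b n :: int)"
  shows "k \<ge> 1 \<Longrightarrow> b k > 0"
proof (induction k rule: less_induct)
  case (less k)
  have "(\<Sum>k\<in>{1..<k}. b k) \<ge> 0" using less.IH by (intro sum_nonneg) fastforce
  then show ?case using hyp[OF less.prems] by linarith
qed

lemma disj_far:
  assumes "S1 \<subseteq> sq y R" "S2 \<subseteq> sq z R" "linf y z > h" "2 * R \<le> h"
  shows "S1 \<inter> S2 = {}"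
proof (rule ccontr)
  assume "S1 \<inter> S2 \<noteq> {}"
  then obtain p where "p \<in> S1" "p \<in> S2" by auto
  then have "linf y p \<le> R" "linf z p \<le> R" using assms by (auto simp: sq_def)
  then show False using linf_tri[of y z p] linf_sym[of z p] assms by simp
qed

lemma witness:
  assumes hyp: "\<And>n. n \<ge> 1 \<Longrightarrow> 12 * (\<Sum>k\<in>{1..<n}. b k) < a n \<and> a n \<le> b n"
  shows "y \<in> clean a b E n \<Longrightarrow> \<exists>S\<in>W b n y. S \<subseteq> E"
proof (induction n arbitrary: y)
  case 0 then show ?case by simp
next
  case (Suc n)
  let ?F = "clean a b E n"
  let ?A = "a (Suc n)" and ?B = "b (Suc n)"
  let ?R = "3 * (\<Sum>k\<in>{1..n}. b k)"
  have bp: "\<And>k. k \<ge> 1 \<Longrightarrow> b k \<ge> 0" using b_pos[OF hyp] by (meson less_imp_le)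
  have hy: "12 * (\<Sum>k\<in>{1..n}. b k) < ?A" "?A \<le> ?B" using hyp[of "Suc n"]
    by (auto simp: atLeastLessThanSuc_atLeastAtMost)
  have R0: "?R \<ge> 0" using bp by (auto intro!: sum_nonneg)
  have A0: "0 < ?A" using hy R0 by linarith
  have R2: "2 * ?R \<le> ?A div 2" using hy by linarith
  have yF: "y \<in> ?F" and nb: "\<not> (\<exists>X. bi_island ?A ?B ?F X \<and> y \<in> X)" using Suc.prems by auto
  obtain z w where zw: "z \<in> ?F" "w \<in> ?F" "linf y z > ?A div 2" "linf y w > ?A div 2" "linf z w > ?A div 2"
          "linf y z \<le> 3 * ?B" "linf y w \<le> 3 * ?B"
    using three_points[OF yF nb A0 hy(2)] by blast
  obtain S1 where S1: "S1 \<in> W b n y" "S1 \<subseteq> E" using Suc.IH[OF yF] by blast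
  obtain S2 where S2: "S2 \<in> W b n z" "S2 \<subseteq> E" using Suc.IH[OF zw(1)] by blast
  obtain S3 where S3: "S3 \<in> W b n w" "S3 \<subseteq> E" using Suc.IH[OF zw(2)] by blast
  note S = S1 S2 S3
  have r: "S1 \<subseteq> sq y ?R" "S2 \<subseteq> sq z ?R" "S3 \<subseteq> sq w ?R"
    using W_radius[OF bp S1(1)] W_radius[OF bp S2(1)] W_radius[OF bp S3(1)] by blast+
  have d: "S1 \<inter> S2 = {}" "S1 \<inter> S3 = {}" "S2 \<inter> S3 = {}"
    by (rule disj_far[OF r(1) r(2) zw(3) R2], rule disj_far[OF r(1) r(3) zw(4) R2], rule disj_far[OF r(2) r(3) zw(5) R2])
  have "S1 \<union> S2 \<union> S3 \<in> W b (Suc n) y"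
    unfolding W.simps mem_Collect_eq
    apply (rule exI[of _ S1], rule exI[of _ S2], rule exI[of _ S3], rule exI[of _ z], rule exI[of _ w])
    using S d zw(6,7) unfolding sq_def by blast
  moreover have "S1 \<union> S2 \<union> S3 \<subseteq> E" using S by blast
  ultimately show ?case by blast
qed



lemma bf_prob: "prob_space (bernoulli_field e)"
  unfolding bernoulli_field_def by (intro prob_space_PiM prob_space_measure_pmf)

lemma bf_space: "space (bernoulli_field e) = UNIV"
  unfolding bernoulli_field_def by (simp add: space_PiM)

definition cyl :: "pt set \<Rightarrow> (pt \<Rightarrow> bool) set" where
  "cyl S = {\<omega>. \<forall>p\<in>S. \<omega> p}"

lemma cyl_emb: "cyl S = prod_emb UNIV (\<lambda>_. measure_pmf (bernoulli_pmf e)) S (\<Pi>\<^sub>E p\<in>S. {True})"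
  by (auto simp: cyl_def prod_emb_def space_PiM PiE_iff restrict_def fun_eq_iff) metis

lemma cyl_sets: "finite S \<Longrightarrow> cyl S \<in> sets (bernoulli_field e)"
  unfolding bernoulli_field_def cyl_emb[of S e] by (rule sets_PiM_I) auto

lemma cyl_measure:
  assumes "finite S" "0 \<le> e" "e \<le> 1"
  shows "measure (bernoulli_field e) (cyl S) = e ^ card S"
proof -
  have "emeasure (bernoulli_field e) (cyl S) = (\<Prod>p\<in>S. emeasure (measure_pmf (bernoulli_pmf e)) {True})"
    unfolding bernoulli_field_def cyl_emb[of S e]
    by (rule emeasure_PiM_emb) (auto simp: prob_space_measure_pmf assms)
  also have "\<dots> = (\<Prod>p\<in>S. ennreal e)" by (simp add: emeasure_pmf_single assms)
  also have "\<dots> = ennreal (e ^ card S)" using assms by (simp add: ennreal_power)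
  finally show ?thesis by (simp add: measure_def assms)
qed

definition G :: "(nat \<Rightarrow> int) \<Rightarrow> nat \<Rightarrow> pt \<Rightarrow> (pt \<Rightarrow> bool) set" where
  "G b n y = (\<Union>S\<in>W b n y. cyl S)"

lemma G_sets: "G b n y \<in> sets (bernoulli_field e)"
  unfolding G_def using W_finite W_card_set cyl_sets by (metis sets.finite_UN)

lemma G_measure:
  fixes e :: real
  assumes "0 \<le> e" "e \<le> 1"
  shows "measure (bernoulli_field e) (G b n y) \<le> card (W b n y) * e ^ (3^n)"
proof -
  have "measure (bernoulli_field e) (G b n y) \<le> (\<Sum>S\<in>W b n y. measure (bernoulli_field e) (cyl S))"
    unfolding G_def by (rule measure_UNION_le) (use W_finite W_card_set cyl_sets in auto)
  also have "\<dots> = (\<Sum>S\<in>W b n y. e ^ (3^n))"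
    by (rule sum.cong) (use W_card_set cyl_measure assms in auto)
  finally show ?thesis by simp
qed



lemma card_W_bound:
  fixes b :: "nat \<Rightarrow> int"
  assumes b1: "\<And>k. k \<ge> 1 \<Longrightarrow> b k \<ge> 1"
  shows "real (card (W b n x)) \<le> exp (3^n * (\<Sum>k\<in>{1..n}. (10 * ln 7 + 10 * ln (real_of_int (b k))) / 3^k))"
proof (induction n arbitrary: x)
  case 0 then show ?case by simp
next
  case (Suc n)
  define c where "c = (\<Sum>k\<in>{1..n}. (10 * ln 7 + 10 * ln (real_of_int (b k))) / 3^k)"
  define M where "M = nat \<lfloor>exp (3^n * c)\<rfloor>"
  have M: "\<And>y. card (W b n y) \<le> M"
  proof -
    fix y
    have "real (card (W b n y)) \<le> exp (3^n * c)" using Suc.IH c_def by simp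
    then have "int (card (W b n y)) \<le> \<lfloor>exp (3^n * c)\<rfloor>" by (simp add: le_floor_iff)
    then show "card (W b n y) \<le> M" unfolding M_def by linarith
  qed
  have Mr: "real M \<le> exp (3^n * c)" unfolding M_def by simp
  let ?b = "b (Suc n)"
  have bb: "?b \<ge> 1" using b1 by simp
  have cs: "real (card (sq x (3 * ?b))) = (6 * ?b + 1)^2" using card_sq[of "3 * ?b" x] bb by simp
  have "real (card (W b (Suc n) x)) \<le> real (card (sq x (3 * ?b))^5 * M^3)"
    using W_card_step[OF M, of x] of_nat_le_iff by blast
  also have "\<dots> = real_of_int ((6 * ?b + 1)^10) * real M ^ 3" using cs
    by (simp add: power_mult[symmetric])
  also have "\<dots> \<le> (7 * real_of_int ?b)^10 * exp (3^n * c) ^ 3"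
  proof (intro mult_mono power_mono)
    show "real_of_int ((6 * ?b + 1)^10) \<le> (7 * real_of_int ?b)^10"
    proof -
      have "real_of_int ((6 * ?b + 1)^10) = (6 * real_of_int ?b + 1)^10" by simp
      also have "\<dots> \<le> (7 * real_of_int ?b)^10" using bb by (intro power_mono) auto
      finally show ?thesis .
    qed
  qed (use Mr bb in auto)
  also have "\<dots> = exp (10 * ln 7 + 10 * ln (real_of_int ?b)) * exp (3^(Suc n) * c)"
  proof -
    have "(7 * real_of_int ?b)^10 = exp (10 * ln 7 + 10 * ln (real_of_int ?b))"
    proof -
      have e: "exp (10 * ln y) = y ^ 10" if "y > 0" for y :: real
        using exp_of_nat_mult[of 10 "ln y"] that by simp
      have "real_of_int ?b > 0" using bb by simp
      then show ?thesis using e[of 7] e[of "real_of_int ?b"] by (simp add: exp_add power_mult_distrib)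
    qed
    moreover have "exp (3^n * c) ^ 3 = exp (3^(Suc n) * c)"
      by (simp add: exp_of_nat_mult[symmetric] algebra_simps)
    ultimately show ?thesis by simp
  qed
  also have "\<dots> = exp (3^(Suc n) * (\<Sum>k\<in>{1..Suc n}. (10 * ln 7 + 10 * ln (real_of_int (b k))) / 3^k))"
    by (simp add: c_def exp_add[symmetric] algebra_simps) (simp add: field_simps)
  finally show ?case .
qed

lemma measure_H:
  fixes b :: "nat \<Rightarrow> int" and e K S0 :: real
  assumes b1: "\<And>k. k \<ge> 1 \<Longrightarrow> b k \<ge> 1"
    and cW: "\<And>n x. real (card (W b n x)) \<le> exp (3^n * K)"
    and Lb: "\<And>i. ln (real_of_int (b (Suc i))) \<le> 3 * 3^i * S0"
    and e: "0 < e" "e \<le> 1" "ln e \<le> - (K + 6 * S0 + 1)"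
  shows "measure (bernoulli_field e) (\<Union>y\<in>sq x (b (Suc i)). G b i y) \<le> 9 * exp (- real i)"
proof -
  let ?M = "bernoulli_field e"
  let ?B = "b (Suc i)"
  have bb: "?B \<ge> 1" using b1 by simp
  have gm: "measure ?M (G b i y) \<le> exp (3^i * (K + ln e))" for y
  proof -
    have "measure ?M (G b i y) \<le> card (W b i y) * e ^ (3^i)" using G_measure e by simp
    also have "\<dots> \<le> exp (3^i * K) * e ^ (3^i)" using cW e by (intro mult_right_mono) auto
    also have "e ^ (3^i) = exp (3^i * ln e)" using e exp_of_nat_mult[of "3^i" "ln e"] by simp
    finally have "measure ?M (G b i y) \<le> exp (3^i * K) * exp (3^i * ln e)" .
    moreover have "exp (3^i * K) * exp (3^i * ln e) = exp (3^i * (K + ln e))"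
      by (simp only: exp_add[symmetric] distrib_left)
    ultimately show ?thesis by simp
  qed
  have "measure ?M (\<Union>y\<in>sq x ?B. G b i y) \<le> (\<Sum>y\<in>sq x ?B. measure ?M (G b i y))"
    by (rule measure_UNION_le) (auto simp: G_sets)
  also have "\<dots> \<le> (\<Sum>y\<in>sq x ?B. exp (3^i * (K + ln e)))" by (rule sum_mono) (rule gm)
  also have "\<dots> = (2 * ?B + 1)^2 * exp (3^i * (K + ln e))" using card_sq[of ?B x] bb by simp
  also have "\<dots> \<le> 9 * exp (3^i * (6 * S0 + K + ln e))"
  proof -
    have "real_of_int ((2 * ?B + 1)^2) = (2 * real_of_int ?B + 1)^2" by simp
    also have "\<dots> \<le> (3 * real_of_int ?B)^2" using bb by (intro power_mono) auto
    also have "\<dots> = 9 * exp (2 * ln (real_of_int ?B))"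
      using bb exp_of_nat_mult[of 2 "ln (real_of_int ?B)"] by (simp add: power2_eq_square)
    also have "\<dots> \<le> 9 * exp (3^i * (6 * S0))" using Lb[of i] by (simp add: algebra_simps)
    finally have "real_of_int ((2 * ?B + 1)^2) \<le> 9 * exp (3^i * (6 * S0))" .
    then have "real_of_int ((2 * ?B + 1)^2) * exp (3^i * (K + ln e)) \<le> 9 * exp (3^i * (6 * S0)) * exp (3^i * (K + ln e))"
      by (intro mult_right_mono) auto
    moreover have "9 * exp (3^i * (6 * S0)) * exp (3^i * (K + ln e)) = 9 * exp (3^i * (6 * S0 + K + ln e))"
      by (simp only: mult.assoc exp_add[symmetric] distrib_left add.assoc)
    ultimately show ?thesis by simp
  qed
  also have "\<dots> \<le> 9 * exp (- real i)"
  proof -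
    have "real i \<le> 3^i"
    proof -
      have "i < 2^i" by (rule less_exp)
      also have "(2::nat)^i \<le> 3^i" by (intro power_mono) auto
      finally show ?thesis by (metis of_nat_le_iff of_nat_numeral of_nat_power less_imp_le)
    qed
    moreover have "3^i * (6 * S0 + K + ln e) \<le> 3^i * (-1::real)"
      by (rule mult_left_mono) (use e(3) in auto)
    ultimately have "3^i * (6 * S0 + K + ln e) \<le> - real i" by linarith
    then show ?thesis by simp
  qed
  finally show ?thesis .
qed

theorem mainTheorem14:
  fixes a b :: "nat \<Rightarrow> int"
  assumes "\<And>n. n \<ge> 1 \<Longrightarrow> 12 * (\<Sum>k\<in>{1..<n}. b k) < a n \<and> a n \<le> b n"
    and "summable (\<lambda>i. ln (real_of_int (b (Suc i))) / 3 ^ (Suc i))"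
  shows "\<forall>\<^sub>F eps in at_right (0::real).
           AE \<omega> in bernoulli_field eps. bi_sparse a b {p. \<omega> p}"
proof -
  have b1: "\<And>k. k \<ge> 1 \<Longrightarrow> b k \<ge> 1" using b_pos[OF assms(1)] by (meson int_one_le_iff_zero_less)
  define f where "f k = (10 * ln 7 + 10 * ln (real_of_int (b k))) / 3^k" for k
  define g where "g i = ln (real_of_int (b (Suc i))) / 3 ^ (Suc i)" for i
  have gs: "summable g" using assms(2) unfolding g_def .
  have g0: "g i \<ge> 0" for i using b1[of "Suc i"] by (simp add: g_def)
  define S0 where "S0 = suminf g"
  have S00: "S0 \<ge> 0" unfolding S0_def using gs g0 by (simp add: suminf_nonneg)
  have Lb: "ln (real_of_int (b (Suc i))) \<le> 3 * 3^i * S0" for i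
  proof -
    have "g i \<le> S0" unfolding S0_def using sum_le_suminf[OF gs, of "{i}"] g0 by simp
    then show ?thesis by (simp add: g_def field_simps)
  qed
  have fe: "(\<lambda>i. f (Suc i)) = (\<lambda>i. (10 * ln 7 / 3) * (1/3)^i + 10 * g i)"
  proof (rule ext)
    fix i
    have "f (Suc i) = 10 * ln 7 / 3^(Suc i) + 10 * g i"
      by (simp add: f_def g_def add_divide_distrib)
    also have "10 * ln 7 / 3^(Suc i) = (10 * ln 7 / 3) * ((1::real)/3)^i"
      by (simp add: power_one_over)
    finally show "f (Suc i) = (10 * ln 7 / 3) * (1/3)^i + 10 * g i" .
  qed
  have fs: "summable (\<lambda>i. f (Suc i))" unfolding fe
    by (rule summable_add[OF summable_mult[OF summable_geometric] summable_mult[OF gs]]) simp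
  define K where "K = suminf (\<lambda>i. f (Suc i))"
  have f0: "f (Suc i) \<ge> 0" for i using b1[of "Suc i"] by (simp add: f_def)
  have K0: "K \<ge> 0" unfolding K_def using fs f0 by (simp add: suminf_nonneg)
  have cK: "(\<Sum>k\<in>{1..n}. f k) \<le> K" for n
  proof -
    have "(\<Sum>k\<in>{1..n}. f k) = (\<Sum>k<n. f (Suc k))" by (simp add: sum_bounds_lt_plus1)
    also have "\<dots> \<le> K" unfolding K_def by (rule sum_le_suminf[OF fs]) (use f0 in auto)
    finally show ?thesis .
  qed
  have cW: "real (card (W b n x)) \<le> exp (3^n * K)" for n x
  proof -
    have "real (card (W b n x)) \<le> exp (3^n * (\<Sum>k\<in>{1..n}. f k))"
      using card_W_bound[OF b1, where n=n and x=x] unfolding f_def by simp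
    also have "\<dots> \<le> exp (3^n * K)" using cK[of n] by simp
    finally show ?thesis .
  qed
  define e0 where "e0 = exp (- (K + 6 * S0 + 1))"
  have e0: "0 < e0" "e0 \<le> 1" using K0 S00 by (auto simp: e0_def)
  show ?thesis
  proof (rule eventually_mono[OF eventually_at_right_real[OF e0(1)]])
    fix e :: real assume "e \<in> {0<..<e0}"
    then have e: "0 < e" "e \<le> 1" "ln e \<le> - (K + 6 * S0 + 1)"
    proof -
      have ee: "0 < e" "e < e0" using \<open>e \<in> {0<..<e0}\<close> by auto
      then have "ln e < ln e0" by (simp add: e0(1))
      moreover have "ln e0 = - (K + 6 * S0 + 1)" by (simp add: e0_def)
      ultimately show "0 < e" "e \<le> 1" "ln e \<le> - (K + 6 * S0 + 1)" using ee e0 by linarith+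
    qed
    let ?M = "bernoulli_field e"
    interpret P: prob_space ?M by (rule bf_prob)
    define H where "H x i = (\<Union>y\<in>sq x (b (Suc i)). G b i y)" for x i
    have Hs: "H x i \<in> sets ?M" for x i unfolding H_def by (auto simp: G_sets)
    have HM: "measure ?M (H x i) \<le> 9 * exp (- real i)" for x i
      unfolding H_def by (rule measure_H[OF b1 cW Lb e])
    have sm: "summable (\<lambda>i. measure ?M (H x i))" for x
    proof (rule summable_comparison_test)
      have "(\<lambda>i. 9 * exp (- real i)) = (\<lambda>i. 9 * exp (-1) ^ i)"
        by (simp add: fun_eq_iff exp_of_nat_mult[symmetric])
      then show "summable (\<lambda>i. 9 * exp (- real i))"
        by (simp add: summable_geometric)
      show "\<exists>N. \<forall>n\<ge>N. norm (measure ?M (H x n)) \<le> 9 * exp (- real n)" using HM by auto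
    qed
    have BC: "AE \<omega> in ?M. eventually (\<lambda>i. \<omega> \<in> space ?M - H x i) sequentially" for x
      by (rule borel_cantelli_AE1[OF Hs]) (simp_all add: sm P.emeasure_finite less_top[symmetric])
    have A: "AE \<omega> in ?M. eventually (\<lambda>i. \<omega> \<notin> H x i) sequentially" for x
      using BC[of x] by (rule eventually_mono) (erule eventually_mono, simp)
    have "AE \<omega> in ?M. \<forall>x. eventually (\<lambda>i. \<omega> \<notin> H x i) sequentially"
      by (rule AE_all_countable[THEN iffD2], intro allI, rule A)
    then show "AE \<omega> in ?M. bi_sparse a b {p. \<omega> p}"
    proof (rule eventually_mono)
      fix \<omega> assume ev: "\<forall>x. eventually (\<lambda>i. \<omega> \<notin> H x i) sequentially"
      let ?E = "{p. \<omega> p}"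
      have inH: "\<omega> \<in> H x i" if yc: "y \<in> clean a b ?E i" and lxy: "linf x y \<le> b (Suc i)" for x y i
      proof -
        obtain S where "S \<in> W b i y" "S \<subseteq> ?E" using witness[OF assms(1) yc] by blast
        then have "\<omega> \<in> G b i y" by (auto simp: G_def cyl_def)
        then show ?thesis unfolding H_def sq_def using lxy by blast
      qed
      have part1: "\<forall>x\<in>?E. \<exists>i. x \<notin> clean a b ?E i"
      proof (intro ballI, rule ccontr)
        fix x assume "\<not> (\<exists>i. x \<notin> clean a b ?E i)"
        then have "\<omega> \<in> H x i" for i using inH[of x i x] b1[of "Suc i"] by simp
        then show False using ev[rule_format, of x] by (simp add: eventually_sequentially)
      qed
      have part2: "finite {i. affected a b ?E i x}" for x
      proof -
        obtain N where N: "\<And>j. j \<ge> N \<Longrightarrow> \<omega> \<notin> H x j" using ev[rule_format, of x]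
          by (auto simp: eventually_sequentially)
        have "{i. affected a b ?E i x} \<subseteq> {..N}"
        proof
          fix i assume "i \<in> {i. affected a b ?E i x}"
          then obtain X where i1: "1 \<le> i" and X: "bi_island (a i) (b i) (clean a b ?E (i - 1)) X"
            and xX: "x \<in> nbhd (b i) X" by (auto simp: affected_def)
          obtain p where p: "p \<in> X" "linf p x \<le> b i" using xX by (auto simp: nbhd_def)
          have "p \<in> clean a b ?E (i - 1)" using X p by (auto simp: bi_island_def)
          moreover have "Suc (i - 1) = i" using i1 by simp
          ultimately have "\<omega> \<in> H x (i - 1)" using inH[of p "i - 1" x] p(2) linf_sym[of p x] by simp
          then have "\<not> (i - 1 \<ge> N)" using N by blast
          then show "i \<in> {..N}" by simp
        qed
        then show ?thesis by (rule finite_subset) simp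
      qed
      show "bi_sparse a b ?E" unfolding bi_sparse_def using part1 part2 by blast
    qed
  qed
qed


end
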